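(* Let $d\ge1$ and let $p_t(x)$, $t\ge0$, $x\in\mathbb Z^d$, be the transition probability of the continuous-time symmetric simple random walk on $\mathbb Z^d$ started at $0$, i.e. the solution of $\partial_tp=\frac{1}{2d}\Delta p$, $p_0=\mathbf 1_{\{x=0\}}$, where $\Delta f(x)=\sum_{n=1}^d(f(x+e_n)+f(x-e_n)-2f(x))$; set $p_t(x)=0$ for $t<0$. Then for all $s,s'\in\mathbb R$ and $y,y'\in\mathbb Z^d$, $\frac1d\sum_{x\in\mathbb Z^d}\sum_{n=1}^d\int_{-\infty}^{\infty}\nabla_np_{t+s}(x+y)\,\nabla_np_{t+s'}(x+y')\,dt=p_{|s-s'|}(y-y'),$ where $\nabla_nf(x)=f(x+e_n)-f(x)$ and $e_n$ is the $n$-th unit vector. *)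

theory Defs
  imports "HOL-Analysis.Analysis"
begin

text \<open>Lattice Z^d is modelled as int ^ 'n, with d = CARD('n) (any d >= 1).
  Unit vector e_n is axis n 1.\<close>

fun srw_step :: "nat \<Rightarrow> int ^ 'n \<Rightarrow> real" where
  "srw_step 0 x = (if x = 0 then 1 else 0)"
| "srw_step (Suc k) x =
     (1 / (2 * real CARD('n))) *
     (\<Sum>n\<in>(UNIV :: 'n set). srw_step k (x + axis n 1) + srw_step k (x - axis n 1))"

text \<open>Transition probability p_t(x) of the continuous-time simple random walk
  (rate-1 Poisson clock, generator (1/(2d)) Laplacian), started at 0;
  p_t(x) = 0 for t < 0.\<close>
definition srw_p :: "real \<Rightarrow> int ^ 'n \<Rightarrow> real" where
  "srw_p t x = (if t < 0 then 0
     else (\<Sum>k. exp (- t) * t ^ k / fact k * srw_step k x))"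

definition grad :: "'n \<Rightarrow> (int ^ 'n \<Rightarrow> real) \<Rightarrow> int ^ 'n \<Rightarrow> real" where
  "grad n f x = f (x + axis n 1) - f x"

end

theory Submission
  imports Defs
begin

lemma srw_step_nonneg: "0 \<le> srw_step k x"
  by (induction k arbitrary: x) (auto intro!: sum_nonneg add_nonneg_nonneg divide_nonneg_nonneg)

definition ibox :: "int \<Rightarrow> (int^'n) set" where "ibox K = {x. \<forall>i. \<bar>x$i\<bar> \<le> K}"

lemma finite_ibox: "finite (ibox K :: (int^'n) set)"
proof -
  have "ibox K \<subseteq> ((\<lambda>f. \<chi> i. f i) ` (PiE UNIV (\<lambda>_. {-K..K})) :: (int^'n) set)"
  proof
    fix x :: "int^'n" assume "x \<in> ibox K"
    then have "(\<lambda>i. x$i) \<in> PiE UNIV (\<lambda>_. {-K..K})" by (auto simp: ibox_def abs_le_iff) (metis minus_le_iff)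
    moreover have "x = (\<chi> i. (\<lambda>i. x$i) i)" by simp
    ultimately show "x \<in> (\<lambda>f. \<chi> i. f i) ` (PiE UNIV (\<lambda>_. {-K..K}))" by blast
  qed
  moreover have "finite (PiE (UNIV::'n set) (\<lambda>_. {-K..K}))" by (intro finite_PiE) auto
  ultimately show ?thesis by (meson finite_imageI finite_subset)
qed

lemma axis_comp: "(axis n (1::int)) $ i = (if i = n then 1 else 0)"
  by (simp add: axis_def)

lemma srw_step_support: "srw_step k x \<noteq> 0 \<Longrightarrow> x \<in> ibox (int k)"
proof (induction k arbitrary: x)
  case 0 then show ?case by (auto simp: ibox_def split: if_splits)
next
  case (Suc k)
  then have "(\<Sum>n\<in>(UNIV :: 'a set). srw_step k (x + axis n 1) + srw_step k (x - axis n 1)) \<noteq> 0"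
    by auto
  then obtain n where "srw_step k (x + axis n 1) + srw_step k (x - axis n 1) \<noteq> 0"
    using sum.not_neutral_contains_not_neutral by blast
  then have "x + axis n 1 \<in> ibox (int k) \<or> x - axis n 1 \<in> ibox (int k)" using Suc.IH by (cases "srw_step k (x + axis n 1) = 0") auto
  then show ?case
    unfolding ibox_def
  proof (elim disjE; clarsimp)
    fix i assume H: "\<forall>i. \<bar>x $ i + axis n 1 $ i\<bar> \<le> int k"
    show "\<bar>x $ i\<bar> \<le> 1 + int k" using H[rule_format, of i] by (auto simp: axis_comp split: if_splits)
  next
    fix i assume H: "\<forall>i. \<bar>x $ i - axis n 1 $ i\<bar> \<le> int k"
    show "\<bar>x $ i\<bar> \<le> 1 + int k" using H[rule_format, of i] by (auto simp: axis_comp split: if_splits)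
  qed
qed

lemma summable_step_shift: "(\<lambda>x. srw_step k (x + a) * f x) summable_on A"
proof (rule finite_nonzero_values_imp_summable_on)
  have "{x \<in> A. srw_step k (x + a) * f x \<noteq> 0} \<subseteq> (\<lambda>v. v - a) ` ibox (int k)"
  proof
    fix x assume "x \<in> {x \<in> A. srw_step k (x + a) * f x \<noteq> 0}"
    then have "x + a \<in> ibox (int k)" using srw_step_support by force
    then show "x \<in> (\<lambda>v. v - a) ` ibox (int k)" by (auto intro: image_eqI[of _ _ "x + a"])
  qed
  then show "finite {x \<in> A. srw_step k (x + a) * f x \<noteq> 0}"
    using finite_ibox finite_subset by blast
qed

lemma summable_step_shift': "(\<lambda>x. f x * srw_step k (x + a)) summable_on A"
  using summable_step_shift[of k a f A] by (simp add: mult.commute)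

lemma infsum_translate: "infsum f UNIV = infsum (\<lambda>x. f (x + a)) (UNIV :: ('a::ab_group_add) set)"
proof -
  have "bij_betw (\<lambda>x. x + a) UNIV (UNIV :: 'a set)"
    by (rule bij_betw_byWitness[where f'="\<lambda>x. x - a"]) (auto simp: algebra_simps image_iff intro: bexI[of _ "_ - a"])
  then show ?thesis by (metis infsum_reindex_bij_betw)
qed

lemma has_sum_translate: "(f has_sum S) UNIV \<longleftrightarrow> ((\<lambda>x. f (x + a)) has_sum S) (UNIV :: ('a::ab_group_add) set)"
proof -
  have "bij_betw (\<lambda>x. x + a) UNIV (UNIV :: 'a set)"
    by (rule bij_betw_byWitness[where f'="\<lambda>x. x - a"]) (auto simp: algebra_simps image_iff intro: bexI[of _ "_ - a"])
  then show ?thesis by (metis has_sum_reindex_bij_betw)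
qed

lemma has_sum_sum_fin:
  fixes f :: "'i \<Rightarrow> 'a \<Rightarrow> real"
  assumes "finite I" "\<And>i. i \<in> I \<Longrightarrow> (f i has_sum S i) A"
  shows "((\<lambda>x. \<Sum>i\<in>I. f i x) has_sum (\<Sum>i\<in>I. S i)) A"
  using assms by (induction I rule: finite_induct) (auto intro!: has_sum_add)

lemma has_sum_diff:
  fixes f :: "'a \<Rightarrow> real"
  assumes "(f has_sum a) A" "(g has_sum b) A"
  shows "((\<lambda>x. f x - g x) has_sum (a - b)) A"
proof -
  have "((\<lambda>x. - g x) has_sum (- b)) A" using assms(2) by (simp add: has_sum_uminus)
  from has_sum_add[OF assms(1) this] show ?thesis by simp
qed

lemma step_chapman_has_sum: "((\<lambda>x. srw_step j (x + z) * srw_step k x) has_sum srw_step (j + k) (z :: int^'n)) UNIV"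
proof (induction k arbitrary: z)
  case 0
  have "((\<lambda>x::int^'n. if x = 0 then srw_step j z else 0) has_sum srw_step j z) UNIV"
    by (rule has_sum_finite_neutralI[where B="{0}"]) auto
  moreover have "(\<lambda>x. srw_step j (x + z) * srw_step 0 x) = (\<lambda>x::int^'n. if x = 0 then srw_step j z else 0)"
    by (auto simp: fun_eq_iff)
  ultimately show ?case by simp
next
  case (Suc k)
  define c where "c = 1 / (2 * real CARD('n))"
  have A: "((\<lambda>x. srw_step j (x + z) * srw_step k (x + axis n 1)) has_sum srw_step (j + k) (z - axis n 1)) UNIV" for n
  proof -
    have "((\<lambda>x. srw_step j ((x - axis n 1) + z) * srw_step k ((x - axis n 1) + axis n 1)) has_sum srw_step (j + k) (z - axis n 1)) UNIV"
      using Suc.IH[of "z - axis n 1"] by (simp add: algebra_simps)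
    then show ?thesis by (subst has_sum_translate[where a="- axis n 1"]) (simp add: algebra_simps)
  qed
  have B: "((\<lambda>x. srw_step j (x + z) * srw_step k (x - axis n 1)) has_sum srw_step (j + k) (z + axis n 1)) UNIV" for n
  proof -
    have "((\<lambda>x. srw_step j ((x + axis n 1) + z) * srw_step k ((x + axis n 1) - axis n 1)) has_sum srw_step (j + k) (z + axis n 1)) UNIV"
      using Suc.IH[of "z + axis n 1"] by (simp add: algebra_simps)
    then show ?thesis by (subst has_sum_translate[where a="axis n 1"]) (simp add: algebra_simps)
  qed
  have "((\<lambda>x. c * (\<Sum>n\<in>UNIV. srw_step j (x + z) * srw_step k (x + axis n 1) + srw_step j (x + z) * srw_step k (x - axis n 1)))
      has_sum c * (\<Sum>n\<in>UNIV. srw_step (j + k) (z - axis n 1) + srw_step (j + k) (z + axis n 1))) UNIV"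
    by (intro has_sum_cmult_right has_sum_sum_fin has_sum_add A B) auto
  moreover have "c * (\<Sum>n\<in>UNIV. srw_step (j + k) (z - axis n 1) + srw_step (j + k) (z + axis n 1)) = srw_step (j + Suc k) z"
    by (simp add: c_def add.commute)
  ultimately show ?case
    by (rule_tac has_sum_cong[THEN iffD1, rotated]) (auto simp: c_def sum_distrib_left algebra_simps)
qed

lemma step_mass: "(srw_step k has_sum 1) (UNIV :: (int^'n) set)"
proof (induction k)
  case 0
  show ?case by (rule has_sum_finite_neutralI[where B="{0}"]) auto
next
  case (Suc k)
  define c where "c = 1 / (2 * real CARD('n))"
  have A: "((\<lambda>x. srw_step k (x + a)) has_sum 1) UNIV" for a :: "int^'n"
    using Suc.IH has_sum_translate by blast
  have A': "((\<lambda>x. srw_step k (x - a)) has_sum 1) UNIV" for a :: "int^'n"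
    using A[of "- a"] by simp
  have "((\<lambda>x::int^'n. c * (\<Sum>n\<in>UNIV. srw_step k (x + axis n 1) + srw_step k (x - axis n 1)))
      has_sum c * (\<Sum>n\<in>(UNIV::'n set). 1 + 1)) UNIV"
    by (intro has_sum_cmult_right has_sum_sum_fin has_sum_add A A') auto
  moreover have "c * (\<Sum>n\<in>(UNIV::'n set). 1 + 1) = 1" by (simp add: c_def)
  moreover have "srw_step (Suc k) = (\<lambda>x::int^'n. c * (\<Sum>n\<in>UNIV. srw_step k (x + axis n 1) + srw_step k (x - axis n 1)))"
    by (auto simp: fun_eq_iff c_def)
  ultimately show ?case by (simp only:)
qed

lemma srw_step_le1: "srw_step k x \<le> 1"
  using finite_sum_le_has_sum[OF step_mass[of k], of "{x}"] srw_step_nonneg by auto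

definition w :: "nat \<Rightarrow> real \<Rightarrow> real" where "w k t = exp (- t) * t ^ k / fact k"

definition P :: "nat \<Rightarrow> real \<Rightarrow> (int^'n) \<Rightarrow> real" where
  "P i t x = (\<Sum>k. w k t * srw_step (k + i) x)"

lemma srw_p_eq: "0 \<le> t \<Longrightarrow> srw_p t x = P 0 t x"
  by (simp add: srw_p_def P_def w_def)

lemma srw_p_neg: "t < 0 \<Longrightarrow> srw_p t x = 0"
  by (simp add: srw_p_def)

lemma w_nonneg: "0 \<le> t \<Longrightarrow> 0 \<le> w k t"
  by (simp add: w_def)

lemma summable_exp_abs: "summable (\<lambda>k. \<bar>t\<bar> ^ k / fact k :: real)"
  using exp_converges[of "\<bar>t\<bar>"] by (simp add: sums_iff divide_inverse mult.commute)

lemma w_sums: "(\<lambda>k. w k t) sums 1"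
proof -
  have "(\<lambda>k. exp (- t) * (t ^ k / fact k)) sums (exp (- t) * exp t)"
    using exp_converges[of t] by (intro sums_mult) (simp add: divide_inverse mult.commute)
  then show ?thesis by (simp add: w_def exp_minus field_simps)
qed

lemma summable_P: "summable (\<lambda>k. w k t * srw_step (k + i) x)"
proof (rule summable_comparison_test)
  show "\<exists>N. \<forall>n\<ge>N. norm (w n t * srw_step (n + i) x) \<le> exp (- t) * (\<bar>t\<bar> ^ n / fact n)"
  proof (intro exI allI impI)
    fix n
    have "norm (w n t * srw_step (n + i) x) = exp (- t) * (\<bar>t\<bar> ^ n / fact n) * srw_step (n + i) x"
      by (simp add: w_def abs_mult power_abs srw_step_nonneg)
    also have "\<dots> \<le> exp (- t) * (\<bar>t\<bar> ^ n / fact n) * 1"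
      by (intro mult_left_mono srw_step_le1) auto
    finally show "norm (w n t * srw_step (n + i) x) \<le> exp (- t) * (\<bar>t\<bar> ^ n / fact n)" by simp
  qed
  show "summable (\<lambda>n. exp (- t) * (\<bar>t\<bar> ^ n / fact n))"
    by (intro summable_mult summable_exp_abs)
qed

lemma P_has_sum: "0 \<le> t \<Longrightarrow> ((\<lambda>k. w k t * srw_step (k + i) x) has_sum P i t x) UNIV"
  unfolding P_def
  by (intro sums_nonneg_imp_has_sum summable_sums summable_P mult_nonneg_nonneg w_nonneg srw_step_nonneg)

lemma P_nonneg: "0 \<le> t \<Longrightarrow> 0 \<le> P i t x"
  unfolding P_def by (intro suminf_nonneg summable_P mult_nonneg_nonneg w_nonneg srw_step_nonneg)

lemma P_mass:
  assumes "0 \<le> t" "finite F"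
  shows "(\<Sum>x\<in>F. P i t x) \<le> 1"
proof -
  have "(\<Sum>x\<in>F. P i t x) = (\<Sum>k. \<Sum>x\<in>F. w k t * srw_step (k + i) x)"
    unfolding P_def by (rule suminf_sum[symmetric]) (rule summable_P)
  also have "\<dots> \<le> (\<Sum>k. w k t)"
  proof (rule suminf_le)
    fix k
    have "(\<Sum>x\<in>F. w k t * srw_step (k + i) x) = w k t * (\<Sum>x\<in>F. srw_step (k + i) x)"
      by (simp add: sum_distrib_left)
    also have "\<dots> \<le> w k t * 1"
      using finite_sum_le_has_sum[OF step_mass[of "k + i"], of F] assms srw_step_nonneg
      by (intro mult_left_mono w_nonneg) auto
    finally show "(\<Sum>x\<in>F. w k t * srw_step (k + i) x) \<le> w k t" by simp
  next
    show "summable (\<lambda>k. \<Sum>x\<in>F. w k t * srw_step (k + i) x)"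
      by (intro summable_sum summable_P)
    show "summable (\<lambda>k. w k t)" using w_sums by (rule sums_summable)
  qed
  also have "\<dots> = 1" using w_sums by (rule sums_unique[symmetric])
  finally show ?thesis .
qed

lemma P_le1: "0 \<le> t \<Longrightarrow> P i t x \<le> 1"
  using P_mass[of t "{x}" i] by simp

lemma P_Suc: "P (Suc i) t x = (1 / (2 * real CARD('n))) *
   (\<Sum>n\<in>UNIV. P i t (x + axis n 1) + P i t (x - axis n 1))" for x :: "int^'n"
proof -
  define c where "c = 1 / (2 * real CARD('n))"
  have "P (Suc i) t x = (\<Sum>k. c * (\<Sum>n\<in>UNIV. w k t * srw_step (k + i) (x + axis n 1) + w k t * srw_step (k + i) (x - axis n 1)))"
    unfolding P_def by (intro suminf_cong) (simp add: c_def sum_distrib_left algebra_simps)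
  also have "\<dots> = c * (\<Sum>n\<in>UNIV. (\<Sum>k. w k t * srw_step (k + i) (x + axis n 1)) + (\<Sum>k. w k t * srw_step (k + i) (x - axis n 1)))"
    apply (subst suminf_mult)
     apply (intro summable_sum summable_add summable_P)
    apply (subst suminf_sum)
     apply (intro summable_add summable_P)
    apply (intro arg_cong[where f="\<lambda>y. c * y"] sum.cong refl)
    apply (rule suminf_add[symmetric]; rule summable_P)
    done
  finally show ?thesis by (simp add: P_def c_def)
qed

lemma P_power_series: "P i t x = exp (- t) * (\<Sum>k. (srw_step (k + i) x / fact k) * t ^ k)"
proof -
  have "P i t x = (\<Sum>k. exp (- t) * ((srw_step (k + i) x / fact k) * t ^ k))"
    unfolding P_def w_def by (intro suminf_cong) simp
  also have "\<dots> = exp (- t) * (\<Sum>k. (srw_step (k + i) x / fact k) * t ^ k)"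
  proof (rule suminf_mult)
    have "summable (\<lambda>k. w k t * srw_step (k + i) x / exp (- t))"
      by (intro summable_divide summable_P)
    then show "summable (\<lambda>k. (srw_step (k + i) x / fact k) * t ^ k)"
      by (simp add: w_def mult_ac)
  qed
  finally show ?thesis .
qed

lemma summable_coeff: "summable (\<lambda>k. (srw_step (k + i) x / fact k) * y ^ k)"
proof -
  have "summable (\<lambda>k. w k y * srw_step (k + i) x / exp (- y))"
    by (intro summable_divide summable_P)
  then show ?thesis by (simp add: w_def mult_ac)
qed

lemma P_deriv: "((\<lambda>t. P i t x) has_real_derivative (P (Suc i) t x - P i t x)) (at t)"
proof -
  define c where "c = (\<lambda>k. srw_step (k + i) x / fact k)"
  define c' where "c' = (\<lambda>k. srw_step (k + Suc i) x / fact k)"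
  have dc: "diffs c = c'"
  proof
    fix n
    have "of_nat (Suc n) * (srw_step (Suc n + i) x / fact (Suc n)) = srw_step (n + Suc i) x / fact n"
      by (simp del: srw_step.simps of_nat_Suc add: fact_Suc divide_simps)
    then show "diffs c n = c' n" by (simp add: diffs_def c_def c'_def del: srw_step.simps)
  qed
  have S: "((\<lambda>t. \<Sum>k. c k * t ^ k) has_real_derivative (\<Sum>k. c' k * t ^ k)) (at t)"
    using termdiffs_strong_converges_everywhere[of c t] summable_coeff unfolding c_def dc[symmetric]
    by blast
  have "((\<lambda>t. exp (- t) * (\<Sum>k. c k * t ^ k)) has_real_derivative
        (- exp (- t)) * (\<Sum>k. c k * t ^ k) + exp (- t) * (\<Sum>k. c' k * t ^ k)) (at t)"
    by (auto intro!: derivative_eq_intros S)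
  moreover have "(- exp (- t)) * (\<Sum>k. c k * t ^ k) + exp (- t) * (\<Sum>k. c' k * t ^ k) = P (Suc i) t x - P i t x"
    using P_power_series[of i t x] P_power_series[of "Suc i" t x] by (simp add: c_def c'_def)
  moreover have "(\<lambda>t. P i t x) = (\<lambda>t. exp (- t) * (\<Sum>k. c k * t ^ k))"
    using P_power_series by (auto simp: fun_eq_iff c_def)
  ultimately show ?thesis by simp
qed

lemma P_cont: "continuous_on A (\<lambda>t. P i t x)"
  by (intro continuous_at_imp_continuous_on ballI DERIV_isCont[OF P_deriv])

lemma has_sum_product_nonneg:
  fixes a :: "'a \<Rightarrow> real" and b :: "'b \<Rightarrow> real"
  assumes ha: "(a has_sum SA) X" and hb: "(b has_sum SB) Y"
    and a0: "\<And>x. x \<in> X \<Longrightarrow> 0 \<le> a x" and b0: "\<And>y. y \<in> Y \<Longrightarrow> 0 \<le> b y"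
  shows "((\<lambda>(x, y). a x * b y) has_sum (SA * SB)) (X \<times> Y)"
proof -
  have inner: "((\<lambda>y. a x * b y) has_sum (a x * SB)) Y" if "x \<in> X" for x
    using hb by (rule has_sum_cmult_right)
  have outer: "((\<lambda>x. a x * SB) has_sum (SA * SB)) X"
    using ha by (rule has_sum_cmult_left)
  have summ: "(\<lambda>(x, y). a x * b y) summable_on (Sigma X (\<lambda>_. Y))"
    by (rule summable_on_SigmaI[where g="\<lambda>x. a x * SB"])
       (use inner outer a0 b0 in \<open>auto intro: has_sum_imp_summable mult_nonneg_nonneg\<close>)
  show ?thesis
    by (rule has_sum_SigmaI[OF _ outer summ]) (use inner in auto)
qed

lemma w_binomial: "(\<Sum>j\<le>m. w j u * w (m - j) v) = w m (u + v)"
proof -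
  have "w m (u + v) = exp (- (u + v)) / fact m * (\<Sum>j\<le>m. of_nat (m choose j) * u ^ j * v ^ (m - j))"
    by (simp add: w_def binomial_ring)
  also have "\<dots> = (\<Sum>j\<le>m. exp (- (u + v)) / fact m * (of_nat (m choose j) * u ^ j * v ^ (m - j)))"
    by (simp add: sum_distrib_left)
  also have "\<dots> = (\<Sum>j\<le>m. w j u * w (m - j) v)"
  proof (intro sum.cong refl)
    fix j assume "j \<in> {..m}"
    then have jm: "j \<le> m" by simp
    show "exp (- (u + v)) / fact m * (of_nat (m choose j) * u ^ j * v ^ (m - j)) = w j u * w (m - j) v"
      by (simp add: binomial_fact[OF jm] w_def exp_add[symmetric] exp_minus field_simps)
  qed
  finally show ?thesis by simp
qed

lemma poisson_cauchy:
  assumes u: "0 \<le> u" and v: "0 \<le> v" and Q0: "\<And>m. 0 \<le> Q m"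
    and hs: "((\<lambda>m. w m (u + v) * Q m) has_sum S) UNIV"
  shows "((\<lambda>(j, k). w j u * w k v * Q (j + k)) has_sum S) UNIV"
proof -
  define F where "F = (\<lambda>(j, k). w j u * w k v * Q (j + k))"
  have bij: "bij_betw (\<lambda>(m, j). (j, m - j)) (Sigma UNIV (\<lambda>m. {..m})) (UNIV :: (nat \<times> nat) set)"
    by (rule bij_betw_byWitness[where f'="\<lambda>(j, k). (j + k, j)"]) (auto simp: image_iff)
  have inner: "((\<lambda>j. F (j, m - j)) has_sum (w m (u + v) * Q m)) {..m}" for m
  proof -
    have "(\<Sum>j\<le>m. F (j, m - j)) = (\<Sum>j\<le>m. w j u * w (m - j) v) * Q m"
      by (auto simp: F_def sum_distrib_right intro!: sum.cong)
    then show ?thesis by (intro has_sum_finiteI) (simp_all add: w_binomial)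
  qed
  have F0: "0 \<le> F p" for p
    using u v Q0 by (auto simp: F_def w_nonneg split: prod.splits)
  have summ: "(\<lambda>(m, j). F (j, m - j)) summable_on Sigma UNIV (\<lambda>m. {..m})"
    by (rule summable_on_SigmaI[where g="\<lambda>m. w m (u + v) * Q m"])
       (use inner hs F0 in \<open>auto intro: has_sum_imp_summable\<close>)
  have "((\<lambda>(m, j). F (j, m - j)) has_sum S) (Sigma UNIV (\<lambda>m. {..m}))"
    by (rule has_sum_SigmaI[OF _ hs summ]) (use inner in auto)
  then have "((\<lambda>x. F ((\<lambda>(m, j). (j, m - j)) x)) has_sum S) (Sigma UNIV (\<lambda>m. {..m}))"
    by (simp add: case_prod_unfold)
  then show ?thesis
    using has_sum_reindex_bij_betw[OF bij, of F S] by (simp add: F_def)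
qed

lemma P_chapman0:
  assumes u: "0 \<le> u" and v: "0 \<le> v"
  shows "((\<lambda>x. P i u (x + z) * P l v x) has_sum P (i + l) (u + v) z) UNIV"
proof -
  define f where "f = (\<lambda>((j, k), x). w j u * w k v * (srw_step (j + i) (x + z) * srw_step (k + l) x))"
  have f0: "0 \<le> f p" for p
    using u v by (auto simp: f_def w_nonneg srw_step_nonneg split: prod.splits)
  have inner: "((\<lambda>x. f ((j, k), x)) has_sum (w j u * w k v * srw_step (j + k + (i + l)) z)) UNIV" for j k
  proof -
    have "((\<lambda>x. srw_step (j + i) (x + z) * srw_step (k + l) x) has_sum srw_step (j + i + (k + l)) z) UNIV"
      by (rule step_chapman_has_sum)
    then have "((\<lambda>x. w j u * w k v * (srw_step (j + i) (x + z) * srw_step (k + l) x)) has_sum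
          (w j u * w k v * srw_step (j + i + (k + l)) z)) UNIV"
      by (rule has_sum_cmult_right)
    moreover have "j + i + (k + l) = j + k + (i + l)" by simp
    ultimately show ?thesis by (simp add: f_def)
  qed
  have outer: "((\<lambda>(j, k). w j u * w k v * srw_step (j + k + (i + l)) z) has_sum P (i + l) (u + v) z) UNIV"
    by (rule poisson_cauchy[OF u v]) (auto simp: srw_step_nonneg intro: P_has_sum add_nonneg_nonneg u v)
  have summ: "f summable_on Sigma UNIV (\<lambda>_. UNIV)"
    by (rule summable_on_SigmaI[where g="\<lambda>(j, k). w j u * w k v * srw_step (j + k + (i + l)) z"])
       (use inner outer f0 in \<open>auto intro: has_sum_imp_summable\<close>)
  have all: "(f has_sum P (i + l) (u + v) z) (UNIV \<times> UNIV)"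
    by (rule has_sum_SigmaI[OF _ outer summ]) (use inner in auto)
  then have all': "((\<lambda>(x, jk). f (jk, x)) has_sum P (i + l) (u + v) z) (UNIV \<times> UNIV)"
    by (subst (asm) has_sum_swap) simp
  have inner2: "((\<lambda>jk. (\<lambda>(x, jk). f (jk, x)) (x, jk)) has_sum (P i u (x + z) * P l v x)) UNIV" for x
  proof -
    have "((\<lambda>(j, k). (w j u * srw_step (j + i) (x + z)) * (w k v * srw_step (k + l) x)) has_sum (P i u (x + z) * P l v x)) (UNIV \<times> UNIV)"
      by (rule has_sum_product_nonneg[OF P_has_sum[OF u] P_has_sum[OF v]])
         (auto intro: mult_nonneg_nonneg w_nonneg u v srw_step_nonneg)
    then show ?thesis
      by (simp add: f_def case_prod_unfold mult_ac)
  qed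
  show ?thesis
    by (rule has_sum_SigmaD[OF all']) (use inner2 in auto)
qed

lemma P_chapman:
  assumes u: "0 \<le> u" and v: "0 \<le> v"
  shows "((\<lambda>x. P i u (x + a) * P l v (x + b)) has_sum P (i + l) (u + v) (a - b)) UNIV"
proof -
  have "((\<lambda>x. P i u (x + (a - b)) * P l v x) has_sum P (i + l) (u + v) (a - b)) UNIV"
    by (rule P_chapman0[OF u v])
  then have "((\<lambda>x. P i u ((x + b) + (a - b)) * P l v (x + b)) has_sum P (i + l) (u + v) (a - b)) UNIV"
    by (subst (asm) has_sum_translate[where a=b])
  then show ?thesis by (simp add: algebra_simps)
qed

lemma srw_p_fun: "0 \<le> t \<Longrightarrow> srw_p t = P 0 t"
  by (auto simp: fun_eq_iff srw_p_eq)

lemma srw_p_fun_neg: "t < 0 \<Longrightarrow> srw_p t = (\<lambda>_. 0)"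
  by (auto simp: fun_eq_iff srw_p_neg)

lemma grad_zero: "grad n (\<lambda>_. 0) x = 0"
  by (simp add: grad_def)

lemma grad_sum_n:
  fixes y y' :: "int^'n"
  assumes u: "0 \<le> u" and v: "0 \<le> v"
  shows "((\<lambda>x. grad n (srw_p u) (x + y) * grad n (srw_p v) (x + y')) has_sum
     (2 * P 0 (u + v) (y - y') - P 0 (u + v) (y - y' + axis n 1) - P 0 (u + v) (y - y' - axis n 1))) UNIV"
proof -
  define e :: "int^'n" where "e = axis n 1"
  define R :: "int^'n \<Rightarrow> real" where "R = P 0 (u + v)"
  have h11: "((\<lambda>x. P 0 u (x + (y + e)) * P 0 v (x + (y' + e))) has_sum R (y - y')) UNIV"
    using P_chapman[OF u v, of 0 "y + e" 0 "y' + e"] by (simp add: R_def)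
  have h10: "((\<lambda>x. P 0 u (x + (y + e)) * P 0 v (x + y')) has_sum R (y - y' + e)) UNIV"
    using P_chapman[OF u v, of 0 "y + e" 0 "y'"] by (simp add: R_def algebra_simps)
  have h01: "((\<lambda>x. P 0 u (x + y) * P 0 v (x + (y' + e))) has_sum R (y - y' - e)) UNIV"
    using P_chapman[OF u v, of 0 "y" 0 "y' + e"] by (simp add: R_def algebra_simps)
  have h00: "((\<lambda>x. P 0 u (x + y) * P 0 v (x + y')) has_sum R (y - y')) UNIV"
    using P_chapman[OF u v, of 0 "y" 0 "y'"] by (simp add: R_def)
  have H: "((\<lambda>x. P 0 u (x + (y + e)) * P 0 v (x + (y' + e)) - P 0 u (x + (y + e)) * P 0 v (x + y')
           - P 0 u (x + y) * P 0 v (x + (y' + e)) + P 0 u (x + y) * P 0 v (x + y'))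
       has_sum (R (y - y') - R (y - y' + e) - R (y - y' - e) + R (y - y'))) UNIV"
    by (intro has_sum_add has_sum_diff h11 h10 h01 h00)
  have eqv: "R (y - y') - R (y - y' + e) - R (y - y' - e) + R (y - y') = 2 * R (y - y') - R (y - y' + e) - R (y - y' - e)"
    by simp
  have Feq: "(\<lambda>x. grad n (srw_p u) (x + y) * grad n (srw_p v) (x + y')) =
     (\<lambda>x. P 0 u (x + (y + e)) * P 0 v (x + (y' + e)) - P 0 u (x + (y + e)) * P 0 v (x + y')
           - P 0 u (x + y) * P 0 v (x + (y' + e)) + P 0 u (x + y) * P 0 v (x + y'))"
    by (auto simp: fun_eq_iff grad_def srw_p_fun[OF u] srw_p_fun[OF v] e_def algebra_simps)
  have "((\<lambda>x. grad n (srw_p u) (x + y) * grad n (srw_p v) (x + y')) has_sum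
     (2 * R (y - y') - R (y - y' + e) - R (y - y' - e))) UNIV"
    using H unfolding Feq eqv .
  then show ?thesis by (simp add: R_def e_def)
qed

lemma grad_sum:
  fixes y y' :: "int^'n"
  assumes u: "0 \<le> u" and v: "0 \<le> v"
  shows "((\<lambda>x. (1 / real CARD('n)) * (\<Sum>n\<in>UNIV. grad n (srw_p u) (x + y) * grad n (srw_p v) (x + y'))) has_sum
     (2 * (P 0 (u + v) (y - y') - P 1 (u + v) (y - y')))) UNIV"
proof -
  define z where "z = y - y'"
  define R :: "int^'n \<Rightarrow> real" where "R = P 0 (u + v)"
  have "((\<lambda>x. (1 / real CARD('n)) * (\<Sum>n\<in>UNIV. grad n (srw_p u) (x + y) * grad n (srw_p v) (x + y'))) has_sum
     ((1 / real CARD('n)) * (\<Sum>n\<in>(UNIV::'n set). 2 * R z - R (z + axis n 1) - R (z - axis n 1)))) UNIV"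
    by (intro has_sum_cmult_right has_sum_sum_fin) (use grad_sum_n[OF u v] in \<open>auto simp: z_def R_def\<close>)
  moreover have "(1 / real CARD('n)) * (\<Sum>n\<in>(UNIV::'n set). 2 * R z - R (z + axis n 1) - R (z - axis n 1))
      = 2 * (R z - P 1 (u + v) z)"
  proof -
    have "(\<Sum>n\<in>(UNIV::'n set). 2 * R z - R (z + axis n 1) - R (z - axis n 1))
        = 2 * real CARD('n) * R z - (\<Sum>n\<in>(UNIV::'n set). R (z + axis n 1) + R (z - axis n 1))"
      by (simp add: sum_subtractf sum.distrib)
    also have "(\<Sum>n\<in>(UNIV::'n set). R (z + axis n 1) + R (z - axis n 1)) = 2 * real CARD('n) * P 1 (u + v) z"
      using P_Suc[of 0 "u + v" z] by (simp add: R_def)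
    finally show ?thesis by (simp add: field_simps)
  qed
  ultimately show ?thesis by (simp add: z_def R_def)
qed

lemma P_deriv0: "((\<lambda>t. P 0 t x) has_real_derivative (P 1 t x - P 0 t x)) (at t)"
  using P_deriv[of 0 x t] by simp

lemma grad_sq_sum:
  assumes u: "0 \<le> u"
  shows "((\<lambda>x::int^'n. (1 / real CARD('n)) * (\<Sum>n\<in>UNIV. grad n (srw_p u) x * grad n (srw_p u) x)) has_sum
     (2 * (P 0 (2 * u) (0::int^'n) - P 1 (2 * u) (0::int^'n)))) UNIV"
proof -
  have "u + u = 2 * u" by simp
  from grad_sum[OF u u, of "0::int^'n" "0::int^'n"] show ?thesis unfolding \<open>u + u = 2 * u\<close> by simp
qed

lemma G0_nonneg:
  assumes r: "0 \<le> r"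
  shows "0 \<le> P 0 r (0::int^'n) - P 1 r (0::int^'n)"
proof -
  have "0 \<le> 2 * (P 0 (2 * (r / 2)) (0::int^'n) - P 1 (2 * (r / 2)) (0::int^'n))"
    by (rule has_sum_nonneg[OF grad_sq_sum]) (use r in \<open>auto intro!: divide_nonneg_nonneg sum_nonneg\<close>)
  then show ?thesis by simp
qed

lemma grad_single_bound:
  fixes x :: "int^'n" and n :: 'n
  assumes u: "0 \<le> u"
  shows "(grad n (P 0 u) x)\<^sup>2 \<le> 2 * real CARD('n) * (P 0 (2 * u) (0::int^'n) - P 1 (2 * u) (0::int^'n))"
proof -
  define g :: "int^'n \<Rightarrow> real" where "g = (\<lambda>x. (1 / real CARD('n)) * (\<Sum>n\<in>UNIV. grad n (srw_p u) x * grad n (srw_p u) x))"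
  have g0: "0 \<le> g x" for x by (auto simp: g_def intro!: divide_nonneg_nonneg sum_nonneg)
  have hs: "(g has_sum (2 * (P 0 (2 * u) (0::int^'n) - P 1 (2 * u) (0::int^'n)))) UNIV"
    unfolding g_def by (rule grad_sq_sum[OF u])
  have "sum g {x} \<le> 2 * (P 0 (2 * u) (0::int^'n) - P 1 (2 * u) (0::int^'n))"
    by (rule finite_sum_le_has_sum[OF hs]) (auto simp: g0)
  then have "g x \<le> 2 * (P 0 (2 * u) (0::int^'n) - P 1 (2 * u) (0::int^'n))" by simp
  moreover have "grad n (srw_p u) x * grad n (srw_p u) x \<le> (\<Sum>n\<in>UNIV. grad n (srw_p u) x * grad n (srw_p u) x)"
    by (rule member_le_sum) auto
  ultimately have "(1 / real CARD('n)) * (grad n (srw_p u) x * grad n (srw_p u) x) \<le> 2 * (P 0 (2 * u) (0::int^'n) - P 1 (2 * u) (0::int^'n))"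
    unfolding g_def by (smt (verit) divide_nonneg_nonneg mult_left_mono of_nat_0_le_iff)
  then show ?thesis
    by (simp add: srw_p_fun[OF u] power2_eq_square field_simps)
qed

lemma P0_antimono:
  assumes "0 \<le> a" "a \<le> b"
  shows "P 0 b (0::int^'n) \<le> P 0 a (0::int^'n)"
proof (rule DERIV_nonpos_imp_nonincreasing[where f="\<lambda>r. P 0 r (0::int^'n)"])
  fix x assume "a \<le> x" "x \<le> b"
  then have "0 \<le> x" using assms by simp
  then show "\<exists>y. ((\<lambda>r. P 0 r (0::int^'n)) has_real_derivative y) (at x) \<and> y \<le> 0"
    using P_deriv[of 0 "0::int^'n" x] G0_nonneg[of x] by (intro exI[of _ "P 1 x (0::int^'n) - P 0 x (0::int^'n)"]) auto
qed (use assms in auto)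

lemma exists_small_G0:
  assumes eps: "0 < \<epsilon>"
  shows "\<exists>\<xi>>1. P 0 \<xi> (0::int^'n) - P 1 \<xi> (0::int^'n) \<le> \<epsilon>"
proof -
  have lt: "1 < 1 + 1 / \<epsilon>" using eps by simp
  have "\<exists>\<xi>. 1 < \<xi> \<and> \<xi> < 1 + 1 / \<epsilon> \<and> P 0 (1 + 1 / \<epsilon>) (0::int^'n) - P 0 1 (0::int^'n) = (1 + 1 / \<epsilon> - 1) * (P 1 \<xi> (0::int^'n) - P 0 \<xi> (0::int^'n))"
    by (rule MVT2[OF lt]) (rule P_deriv0)
  then obtain \<xi> where \<xi>: "1 < \<xi>"
    and eq: "P 0 (1 + 1 / \<epsilon>) (0::int^'n) - P 0 1 (0::int^'n) = (1 + 1 / \<epsilon> - 1) * (P 1 \<xi> (0::int^'n) - P 0 \<xi> (0::int^'n))"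
    by blast
  have "P 0 \<xi> (0::int^'n) - P 1 \<xi> (0::int^'n) = \<epsilon> * (P 0 1 (0::int^'n) - P 0 (1 + 1 / \<epsilon>) (0::int^'n))"
    using eq eps by (simp add: field_simps)
  also have "\<dots> \<le> \<epsilon> * 1"
    using P_le1[of 1 0 "0::int^'n"] P_nonneg[of "1 + 1 / \<epsilon>" 0 "0::int^'n"] eps
    by (intro mult_left_mono) auto
  finally show ?thesis using \<xi> by auto
qed

lemma chain_bound:
  fixes n0 :: "'n::finite"
  assumes u: "0 \<le> u" and bd: "\<And>x::int^'n. \<bar>P 0 u (x + axis n0 1) - P 0 u x\<bar> \<le> \<delta>"
  shows "real (Suc L) * (P 0 u (0::int^'n) - real L * \<delta>) \<le> 1"
proof -
  define p :: "nat \<Rightarrow> int^'n" where "p j = axis n0 (int j)" for j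
  have d0: "0 \<le> \<delta>" using bd[of 0] by simp
  have psuc: "p (Suc j) = p j + axis n0 1" for j
    by (simp add: p_def axis_def vec_eq_iff)
  have step: "P 0 u (0::int^'n) - real j * \<delta> \<le> P 0 u (p j)" for j
  proof (induction j)
    case 0 then show ?case by (simp add: p_def axis_def vec_eq_iff zero_vec_def)
  next
    case (Suc j)
    have "P 0 u (p j) - \<delta> \<le> P 0 u (p (Suc j))"
      using bd[of "p j"] unfolding psuc by linarith
    then show ?case using Suc.IH by (simp add: algebra_simps)
  qed
  have inj: "inj_on p {..L}" by (auto simp: inj_on_def p_def axis_eq_axis)
  have "real (Suc L) * (P 0 u (0::int^'n) - real L * \<delta>) = (\<Sum>j\<le>L. P 0 u (0::int^'n) - real L * \<delta>)" by simp
  also have "\<dots> \<le> (\<Sum>j\<le>L. P 0 u (0::int^'n) - real j * \<delta>)"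
    by (intro sum_mono) (use d0 in \<open>auto intro: mult_right_mono\<close>)
  also have "\<dots> \<le> (\<Sum>j\<le>L. P 0 u (p j))" by (intro sum_mono step)
  also have "\<dots> = (\<Sum>x\<in>p ` {..L}. P 0 u x)" by (simp add: sum.reindex[OF inj])
  also have "\<dots> \<le> 1" by (rule P_mass[OF u]) simp
  finally show ?thesis .
qed

lemma P0_lim0: "((\<lambda>r. P 0 r (0::int^'n)) \<longlongrightarrow> 0) at_top"
proof (rule order_tendstoI)
  fix a :: real assume "a < 0"
  then show "eventually (\<lambda>r. a < P 0 r (0::int^'n)) at_top"
    unfolding eventually_at_top_linorder using \<open>a < 0\<close> by (intro exI[of _ "0::real"]) (auto intro: less_le_trans[OF _ P_nonneg])
next
  fix \<eta> :: real assume eta: "0 < \<eta>"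
  define L where "L = nat \<lceil>2 / \<eta>\<rceil>"
  have L: "2 / \<eta> \<le> real L" unfolding L_def by linarith
  then have L2: "1 / real (Suc L) < \<eta> / 2" using eta by (simp add: field_simps)
  define \<delta> where "\<delta> = \<eta> / (4 * real (Suc L))"
  have d0: "0 < \<delta>" using eta by (simp add: \<delta>_def)
  have Ld: "real L * \<delta> < \<eta> / 4"
    using eta by (simp add: \<delta>_def field_simps)
  define \<epsilon> where "\<epsilon> = \<delta>\<^sup>2 / (2 * real CARD('n))"
  have e0: "0 < \<epsilon>" using d0 by (simp add: \<epsilon>_def)
  obtain \<xi> where xi: "1 < \<xi>" "P 0 \<xi> (0::int^'n) - P 1 \<xi> (0::int^'n) \<le> \<epsilon>"
    using exists_small_G0[OF e0] by auto
  define u where "u = \<xi> / 2"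
  have u0: "0 \<le> u" using xi by (simp add: u_def)
  obtain n0 :: 'n where True by simp
  have bd: "\<bar>P 0 u (x + axis n0 1) - P 0 u x\<bar> \<le> \<delta>" for x :: "int^'n"
  proof -
    have "(grad n0 (P 0 u) x)\<^sup>2 \<le> 2 * real CARD('n) * (P 0 (2 * u) (0::int^'n) - P 1 (2 * u) (0::int^'n))"
      by (rule grad_single_bound[OF u0])
    also have "\<dots> \<le> 2 * real CARD('n) * \<epsilon>"
      using xi by (intro mult_left_mono) (auto simp: u_def)
    also have "\<dots> = \<delta>\<^sup>2" by (simp add: \<epsilon>_def)
    finally have "(grad n0 (P 0 u) x)\<^sup>2 \<le> \<delta>\<^sup>2" .
    then have "\<bar>grad n0 (P 0 u) x\<bar> \<le> \<bar>\<delta>\<bar>" by (simp only: abs_le_square_iff)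
    then show ?thesis using d0 by (simp add: grad_def)
  qed
  have "real (Suc L) * (P 0 u (0::int^'n) - real L * \<delta>) \<le> 1"
    by (rule chain_bound[OF u0 bd])
  then have "P 0 u (0::int^'n) - real L * \<delta> \<le> 1 / real (Suc L)"
    by (simp add: field_simps mult.commute)
  then have Pu: "P 0 u (0::int^'n) < \<eta>" using L2 Ld eta by linarith
  show "eventually (\<lambda>r. P 0 r (0::int^'n) < \<eta>) at_top"
    unfolding eventually_at_top_linorder
  proof (intro exI[of _ \<xi>] allI impI)
    fix r assume "\<xi> \<le> r"
    then have "P 0 r (0::int^'n) \<le> P 0 u (0::int^'n)" using u0 xi by (intro P0_antimono) (auto simp: u_def)
    then show "P 0 r (0::int^'n) < \<eta>" using Pu by simp
  qed
qed

lemma P0_le_P00: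
  assumes r: "0 \<le> r"
  shows "P 0 r (z::int^'n) \<le> P 0 r (0::int^'n)"
proof -
  define u where "u = r / 2"
  have u: "0 \<le> u" using r by (simp add: u_def)
  have h1: "((\<lambda>x. P 0 u (x + z) * P 0 u (x + (0::int^'n))) has_sum P 0 r z) UNIV"
    using P_chapman[OF u u, of 0 z 0 0] by (simp add: u_def)
  have h2: "((\<lambda>x. P 0 u (x + z) * P 0 u (x + z)) has_sum P 0 r (0::int^'n)) UNIV"
    using P_chapman[OF u u, of 0 z 0 z] by (simp add: u_def)
  have h3: "((\<lambda>x. P 0 u (x + (0::int^'n)) * P 0 u (x + (0::int^'n))) has_sum P 0 r (0::int^'n)) UNIV"
    using P_chapman[OF u u, of 0 0 0 0] by (simp add: u_def)
  have h4: "((\<lambda>x. (P 0 u (x + z) * P 0 u (x + z) + P 0 u (x + (0::int^'n)) * P 0 u (x + (0::int^'n))) / 2) has_sum ((P 0 r (0::int^'n) + P 0 r (0::int^'n)) / 2)) UNIV"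
    using has_sum_cmult_left[OF has_sum_add[OF h2 h3], of "1/2"] by simp
  have "P 0 r z \<le> (P 0 r (0::int^'n) + P 0 r (0::int^'n)) / 2"
  proof (rule has_sum_mono[OF h1 h4])
    fix x
    show "P 0 u (x + z) * P 0 u (x + (0::int^'n)) \<le> (P 0 u (x + z) * P 0 u (x + z) + P 0 u (x + (0::int^'n)) * P 0 u (x + (0::int^'n))) / 2"
      using sum_squares_bound[of "P 0 u (x + z)" "P 0 u (x + (0::int^'n))"] by (simp add: power2_eq_square field_simps)
  qed
  then show ?thesis by simp
qed

lemma P0_lim: "((\<lambda>r. P 0 r (z::int^'n)) \<longlongrightarrow> 0) at_top"
proof (rule tendsto_sandwich[OF _ _ tendsto_const P0_lim0])
  show "eventually (\<lambda>r. 0 \<le> P 0 r (z::int^'n)) at_top"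
    using eventually_ge_at_top[of "0::real"] by eventually_elim (rule P_nonneg)
  show "eventually (\<lambda>r. P 0 r z \<le> P 0 r (0::int^'n)) at_top"
    using eventually_ge_at_top[of "0::real"] by eventually_elim (rule P0_le_P00)
qed

lemma P_affine_deriv:
  "((\<lambda>t. P i (2 * t + b) z) has_real_derivative (2 * (P (Suc i) (2 * t + b) z - P i (2 * t + b) z))) (at t)"
proof -
  have d: "((\<lambda>t. 2 * t + b) has_real_derivative 2) (at t)"
    by (auto intro!: derivative_eq_intros)
  from DERIV_chain2[OF P_deriv d] show ?thesis by (simp add: mult.commute)
qed

lemma P_affine_isCont: "isCont (\<lambda>t. P i (2 * t + b) z) t"
  by (rule DERIV_isCont[OF P_affine_deriv])

lemma G_isCont: "isCont (\<lambda>t. 2 * (P 0 (2 * t + b) z - P 1 (2 * t + b) z)) t"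
  by (intro continuous_intros P_affine_isCont)

lemma F_deriv: "((\<lambda>t. - P 0 (2 * t + b) z) has_real_derivative (2 * (P 0 (2 * t + b) z - P 1 (2 * t + b) z))) (at t)"
proof -
  have "((\<lambda>t. - P 0 (2 * t + b) z) has_real_derivative - (2 * (P (Suc 0) (2 * t + b) z - P 0 (2 * t + b) z))) (at t)"
    by (intro DERIV_minus P_affine_deriv)
  then show ?thesis by (simp add: algebra_simps)
qed

lemma affine_at_top: "filterlim (\<lambda>t::real. 2 * t + b) at_top at_top"
  unfolding filterlim_at_top
proof
  fix Z :: real
  show "eventually (\<lambda>t. Z \<le> 2 * t + b) at_top"
    unfolding eventually_at_top_linorder by (intro exI[of _ "(Z - b) / 2"]) auto
qed

lemma F_limits:
  shows "(((\<lambda>t. - P 0 (2 * t + b) z) \<circ> real_of_ereal) \<longlongrightarrow> - P 0 (2 * t0 + b) z) (at_right (ereal t0))"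
    and "(((\<lambda>t. - P 0 (2 * t + b) (z::int^'n)) \<circ> real_of_ereal) \<longlongrightarrow> 0) (at_left \<infinity>)"
proof -
  have "isCont (\<lambda>t. - P 0 (2 * t + b) z) t0"
    by (intro continuous_intros P_affine_isCont)
  then have "continuous (at_right t0) (\<lambda>t. - P 0 (2 * t + b) z)"
    using continuous_at_split by blast
  then show "(((\<lambda>t. - P 0 (2 * t + b) z) \<circ> real_of_ereal) \<longlongrightarrow> - P 0 (2 * t0 + b) z) (at_right (ereal t0))"
    unfolding ereal_tendsto_simps1 continuous_within by simp
  have "((\<lambda>t. P 0 (2 * t + b) z) \<longlongrightarrow> 0) at_top"
    by (rule filterlim_compose[OF P0_lim affine_at_top])
  then have "((\<lambda>t. - P 0 (2 * t + b) z) \<longlongrightarrow> - 0) at_top"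
    by (rule tendsto_minus)
  then show "(((\<lambda>t. - P 0 (2 * t + b) (z::int^'n)) \<circ> real_of_ereal) \<longlongrightarrow> 0) (at_left \<infinity>)"
    unfolding ereal_tendsto_simps1 by simp
qed

lemma FTC_nonneg:
  assumes t0: "0 \<le> 2 * t0 + c"
  shows "set_integrable lborel (einterval (ereal t0) \<infinity>) (\<lambda>t. 2 * (P 0 (2 * t + c) (0::int^'n) - P 1 (2 * t + c) (0::int^'n)))"
proof (rule interval_integral_FTC_nonneg(1)[where F="\<lambda>t. - P 0 (2*t+c) (0::int^'n)" and A="- P 0 (2*t0+c) (0::int^'n)" and B=0])
  show "ereal t0 < \<infinity>" by simp
  show "((\<lambda>t. - P 0 (2*t+c) (0::int^'n)) has_real_derivative (2 * (P 0 (2 * x + c) (0::int^'n) - P 1 (2 * x + c) (0::int^'n)))) (at x)" for x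
    by (rule F_deriv)
  show "isCont (\<lambda>t. 2 * (P 0 (2 * t + c) (0::int^'n) - P 1 (2 * t + c) (0::int^'n))) x" for x
    by (rule G_isCont)
  show "(((\<lambda>t. - P 0 (2*t+c) (0::int^'n)) \<circ> real_of_ereal) \<longlongrightarrow> - P 0 (2*t0+c) (0::int^'n)) (at_right (ereal t0))"
    by (rule F_limits(1))
  show "(((\<lambda>t. - P 0 (2*t+c) (0::int^'n)) \<circ> real_of_ereal) \<longlongrightarrow> 0) (at_left \<infinity>)"
    by (rule F_limits(2))
  show "AE x in lborel. ereal t0 < ereal x \<longrightarrow> ereal x < \<infinity> \<longrightarrow> 0 \<le> 2 * (P 0 (2 * x + c) (0::int^'n) - P 1 (2 * x + c) (0::int^'n))"
  proof (rule AE_I2, intro impI)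
    fix x assume "ereal t0 < ereal x"
    then have "0 \<le> 2 * x + c" using t0 by simp
    then show "0 \<le> 2 * (P 0 (2 * x + c) (0::int^'n) - P 1 (2 * x + c) (0::int^'n))"
      using G0_nonneg by simp
  qed
qed

lemma FTC_val:
  assumes int: "set_integrable lborel (einterval (ereal t0) \<infinity>) (\<lambda>t. 2 * (P 0 (2 * t + b) z - P 1 (2 * t + b) (z::int^'n)))"
  shows "(LBINT t=ereal t0..\<infinity>. 2 * (P 0 (2 * t + b) z - P 1 (2 * t + b) z)) = P 0 (2 * t0 + b) z"
proof -
  have "(LBINT t=ereal t0..\<infinity>. 2 * (P 0 (2 * t + b) z - P 1 (2 * t + b) z)) = 0 - (- P 0 (2 * t0 + b) z)"
  proof (rule interval_integral_FTC_integrable[OF _ _ _ int F_limits(1) F_limits(2)])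
    show "ereal t0 < \<infinity>" by simp
    show "((\<lambda>t. - P 0 (2*t+b) z) has_vector_derivative (2 * (P 0 (2 * x + b) z - P 1 (2 * x + b) z))) (at x)" for x
      using F_deriv[of b z x] has_real_derivative_iff_has_vector_derivative by blast
    show "isCont (\<lambda>t. 2 * (P 0 (2 * t + b) z - P 1 (2 * t + b) z)) x" for x
      by (rule G_isCont)
  qed
  then show ?thesis by simp
qed

definition Aval :: "real \<Rightarrow> int^'n \<Rightarrow> real" where
  "Aval u v0 = (if 0 \<le> u then 2 * (P 0 (2 * u) v0 - P 1 (2 * u) v0) else 0)"

definition SQ :: "real \<Rightarrow> int^'n \<Rightarrow> int^'n \<Rightarrow> real" where
  "SQ u wv x = (1 / real CARD('n)) * (\<Sum>n\<in>UNIV. (grad n (srw_p u) (x + wv))\<^sup>2)"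

lemma SQ_nonneg: "0 \<le> SQ u wv x"
  by (auto simp: SQ_def intro!: divide_nonneg_nonneg sum_nonneg)

lemma SQ_has_sum: fixes wv :: "int^'n" shows "((\<lambda>x. SQ u wv x) has_sum Aval u (0::int^'n)) UNIV"
proof (cases "0 \<le> u")
  case True
  have "u + u = 2 * u" by simp
  with grad_sum[OF True True, of wv wv] show ?thesis
    by (simp add: SQ_def Aval_def True power2_eq_square)
next
  case False
  then have "SQ u wv x = 0" for x
    by (simp add: SQ_def srw_p_fun_neg grad_zero)
  then show ?thesis using False by (simp add: Aval_def)
qed

lemma SQ_le_A: fixes wv x :: "int^'n" shows "SQ u wv x \<le> Aval u (0::int^'n)"
  using finite_sum_le_has_sum[OF SQ_has_sum[of u wv], of "{x}"] SQ_nonneg by auto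

lemma Aval_nonneg: "0 \<le> Aval u (0::int^'n)"
  using SQ_le_A[of u "0::int^'n" 0] SQ_nonneg[of u "0::int^'n" 0] by linarith

lemma sq_le_SQ:
  fixes x wv :: "int^'n"
  shows "(grad n (srw_p u) (x + wv))\<^sup>2 \<le> real CARD('n) * SQ u wv x"
proof -
  have "(grad n (srw_p u) (x + wv))\<^sup>2 \<le> (\<Sum>n\<in>UNIV. (grad n (srw_p u) (x + wv))\<^sup>2)"
    by (rule member_le_sum) auto
  then show ?thesis by (simp add: SQ_def)
qed

lemma P_shift_isCont: "isCont (\<lambda>t. P i (t + c) wv) t"
  by (rule isCont_o2[OF _ DERIV_isCont[OF P_deriv]]) (intro continuous_intros)

lemma P_shift_cont: "continuous_on UNIV (\<lambda>t. P i (t + c) wv)"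
  by (intro continuous_at_imp_continuous_on ballI P_shift_isCont)

lemma srw_p_shift_meas: "(\<lambda>t. srw_p (t + c) wv) \<in> borel_measurable borel"
proof -
  have eq: "(\<lambda>t. srw_p (t + c) wv) = (\<lambda>t. indicator {- c..} t * P 0 (t + c) wv)"
    by (auto simp: fun_eq_iff srw_p_eq srw_p_neg indicator_def)
  show ?thesis unfolding eq
    by (intro borel_measurable_times borel_measurable_indicator borel_measurable_continuous_onI[OF P_shift_cont]) simp
qed

lemma Aval_shift_meas: "(\<lambda>t. Aval (t + c) (0::int^'n)) \<in> borel_measurable borel"
proof -
  have c: "continuous_on UNIV (\<lambda>t. 2 * (P 0 (2 * t + 2 * c) (0::int^'n) - P 1 (2 * t + 2 * c) (0::int^'n)))"
    by (intro continuous_at_imp_continuous_on ballI G_isCont)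
  have eq: "(\<lambda>t. Aval (t + c) (0::int^'n)) = (\<lambda>t. if 0 \<le> t + c then 2 * (P 0 (2 * t + 2 * c) (0::int^'n) - P 1 (2 * t + 2 * c) (0::int^'n)) else 0)"
    by (auto simp: fun_eq_iff Aval_def algebra_simps)
  have [measurable]: "(\<lambda>t. 2 * (P 0 (2 * t + 2 * c) (0::int^'n) - P 1 (2 * t + 2 * c) (0::int^'n))) \<in> borel_measurable borel"
    by (rule borel_measurable_continuous_onI[OF c])
  show ?thesis unfolding eq by measurable
qed

lemma Aval_integrable: "integrable lborel (\<lambda>t. Aval (t + c) (0::int^'n))"
proof -
  have "set_integrable lborel (einterval (ereal (- c)) \<infinity>) (\<lambda>t. 2 * (P 0 (2 * t + 2 * c) (0::int^'n) - P 1 (2 * t + 2 * c) (0::int^'n)))"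
    by (rule FTC_nonneg) simp
  then have I: "integrable lborel (\<lambda>t. indicator (einterval (ereal (- c)) \<infinity>) t *\<^sub>R (2 * (P 0 (2 * t + 2 * c) (0::int^'n) - P 1 (2 * t + 2 * c) (0::int^'n))))"
    by (simp add: set_integrable_def)
  show ?thesis
  proof (rule integrable_cong_AE_imp[OF I])
    show "(\<lambda>t. Aval (t + c) (0::int^'n)) \<in> borel_measurable lborel"
      using Aval_shift_meas by simp
    show "AE t in lborel. indicator (einterval (ereal (- c)) \<infinity>) t *\<^sub>R (2 * (P 0 (2 * t + 2 * c) (0::int^'n) - P 1 (2 * t + 2 * c) (0::int^'n))) = Aval (t + c) (0::int^'n)"
      using AE_lborel_singleton[of "- c"]
      by eventually_elim (auto simp: Aval_def indicator_def einterval_def algebra_simps)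
  qed
qed

lemma abs_prod_le: "\<bar>a * b\<bar> \<le> (a\<^sup>2 + b\<^sup>2) / (2::real)"
  using sum_squares_bound[of "\<bar>a\<bar>" "\<bar>b\<bar>"] by (simp add: abs_mult power2_eq_square field_simps)

theorem lemma4p2:
  fixes s s' :: real and y y' :: "int ^ 'n"
  shows "(\<forall>x n. (\<lambda>t. grad n (srw_p (t + s)) (x + y) * grad n (srw_p (t + s')) (x + y'))
              absolutely_integrable_on (UNIV :: real set))
    \<and> ((\<lambda>x. (1 / real CARD('n)) *
           (\<Sum>n\<in>(UNIV :: 'n set). integral (UNIV :: real set)
              (\<lambda>t. grad n (srw_p (t + s)) (x + y) * grad n (srw_p (t + s')) (x + y'))))
        has_sum srw_p \<bar>s - s'\<bar> (y - y')) (UNIV :: (int ^ 'n) set)"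
proof -
  define d where "d = real CARD('n)"
  have d0: "0 < d" by (simp add: d_def)
  define h where "h = (\<lambda>(x::int^'n) (n::'n) t. grad n (srw_p (t + s)) (x + y) * grad n (srw_p (t + s')) (x + y'))"
  define H where "H = (\<lambda>(x::int^'n) t. (1 / d) * (\<Sum>n\<in>UNIV. h x n t))"
  define \<Phi> where "\<Phi> = (\<lambda>t. (Aval (t + s) (0::int^'n) + Aval (t + s') (0::int^'n)) / 2)"
  define \<psi> where "\<psi> = (\<lambda>(x::int^'n) t. (SQ (t + s) y x + SQ (t + s') y' x) / 2)"
  have grad_meas: "(\<lambda>t. grad n (srw_p (t + c)) wv) \<in> borel_measurable lborel" for n c and wv :: "int^'n"
    unfolding grad_def using srw_p_shift_meas by (intro borel_measurable_diff) auto
  have meas_h: "h x n \<in> borel_measurable lborel" for x n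
    unfolding h_def by (intro borel_measurable_times grad_meas)
  have meas_H: "H x \<in> borel_measurable lborel" for x
    unfolding H_def by (intro borel_measurable_times borel_measurable_sum meas_h) auto
  have \<Phi>int: "integrable lborel \<Phi>"
    unfolding \<Phi>_def by (intro integrable_divide Bochner_Integration.integrable_add Aval_integrable)
  have \<Phi>0: "0 \<le> \<Phi> t" for t
    unfolding \<Phi>_def by (intro divide_nonneg_nonneg add_nonneg_nonneg Aval_nonneg) auto
  have h_bound: "\<bar>h x n t\<bar> \<le> d * \<Phi> t" for x n t
  proof -
    have "\<bar>h x n t\<bar> \<le> ((grad n (srw_p (t + s)) (x + y))\<^sup>2 + (grad n (srw_p (t + s')) (x + y'))\<^sup>2) / 2"
      unfolding h_def by (rule abs_prod_le)
    also have "\<dots> \<le> (d * SQ (t + s) y x + d * SQ (t + s') y' x) / 2"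
      using sq_le_SQ[of n "t + s" x y] sq_le_SQ[of n "t + s'" x y'] by (simp add: d_def)
    also have "\<dots> \<le> (d * Aval (t + s) (0::int^'n) + d * Aval (t + s') (0::int^'n)) / 2"
      using SQ_le_A[of "t + s" y x] SQ_le_A[of "t + s'" y' x] d0 by (intro divide_right_mono add_mono mult_left_mono) auto
    also have "\<dots> = d * \<Phi> t" by (simp add: \<Phi>_def algebra_simps)
    finally show ?thesis .
  qed
  have h_int: "integrable lborel (h x n)" for x n
  proof (rule Bochner_Integration.integrable_bound[OF _ meas_h])
    show "integrable lborel (\<lambda>t. d * \<Phi> t)" using \<Phi>int by simp
    show "AE t in lborel. norm (h x n t) \<le> norm (d * \<Phi> t)"
    proof (intro AE_I2)
      fix t
      show "norm (h x n t) \<le> norm (d * \<Phi> t)"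
        using h_bound[of x n t] d0 \<Phi>0[of t] by (simp add: abs_mult)
    qed
  qed
  have H_bound: "\<bar>H x t\<bar> \<le> \<psi> x t" for x t
  proof -
    have "\<bar>H x t\<bar> \<le> (1 / d) * (\<Sum>n\<in>UNIV. \<bar>h x n t\<bar>)"
      unfolding H_def using d0 by (simp add: abs_mult divide_right_mono sum_abs)
    also have "\<dots> \<le> (1 / d) * (\<Sum>n\<in>UNIV. ((grad n (srw_p (t + s)) (x + y))\<^sup>2 + (grad n (srw_p (t + s')) (x + y'))\<^sup>2) / 2)"
      unfolding h_def using d0 by (intro mult_left_mono sum_mono abs_prod_le) auto
    also have "\<dots> = \<psi> x t"
      by (simp add: \<psi>_def SQ_def d_def sum.distrib sum_divide_distrib[symmetric] field_simps)
    finally show ?thesis .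
  qed
  have \<psi>0: "0 \<le> \<psi> x t" for x t by (simp add: \<psi>_def SQ_nonneg)
  have \<psi>_sum: "((\<lambda>x. \<psi> x t) has_sum \<Phi> t) UNIV" for t
  proof -
    have "((\<lambda>x. (1/2) * (SQ (t + s) y x + SQ (t + s') y' x)) has_sum ((1/2) * (Aval (t + s) (0::int^'n) + Aval (t + s') (0::int^'n)))) UNIV"
      by (intro has_sum_cmult_right has_sum_add SQ_has_sum)
    then show ?thesis unfolding \<psi>_def \<Phi>_def by simp
  qed
  have \<psi>_le: "\<psi> x t \<le> \<Phi> t" for x t
    using finite_sum_le_has_sum[OF \<psi>_sum[of t], of "{x}"] \<psi>0 by auto
  have H_int: "integrable lborel (H x)" for x
  proof (rule Bochner_Integration.integrable_bound[OF \<Phi>int meas_H])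
    show "AE t in lborel. norm (H x t) \<le> norm (\<Phi> t)"
      using H_bound \<psi>_le \<Phi>0 by (intro AE_I2) (smt (verit) real_norm_def)
  qed
  have part1: "\<forall>x n. (\<lambda>t. grad n (srw_p (t + s)) (x + y) * grad n (srw_p (t + s')) (x + y'))
              absolutely_integrable_on (UNIV :: real set)"
  proof (intro allI)
    fix x n
    have "integrable lebesgue (h x n)"
      using integrable_completion[OF meas_h[of x n]] h_int[of x n] by simp
    then show "(\<lambda>t. grad n (srw_p (t + s)) (x + y) * grad n (srw_p (t + s')) (x + y'))
              absolutely_integrable_on (UNIV :: real set)"
      by (simp add: set_integrable_def h_def)
  qed
  have cU: "countable (UNIV :: (int^'n) set)" by simp
  have iU: "infinite (UNIV :: (int^'n) set)" by (intro infinite_UNIV_vec infinite_UNIV_int)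
  obtain e :: "nat \<Rightarrow> int^'n" where e: "bij_betw e UNIV UNIV"
    using bij_betw_from_nat_into[OF cU iU] by blast
  define z where "z = y - y'"
  define K where "K = (\<lambda>t. if 0 \<le> t + s \<and> 0 \<le> t + s' then 2 * (P 0 (2 * t + (s + s')) z - P 1 (2 * t + (s + s')) z) else 0)"
  have H_sum: "((\<lambda>x. H x t) has_sum K t) UNIV" for t
  proof (cases "0 \<le> t + s \<and> 0 \<le> t + s'")
    case True
    then have "((\<lambda>x. (1 / real CARD('n)) * (\<Sum>n\<in>UNIV. grad n (srw_p (t + s)) (x + y) * grad n (srw_p (t + s')) (x + y'))) has_sum
        2 * (P 0 ((t + s) + (t + s')) (y - y') - P 1 ((t + s) + (t + s')) (y - y'))) UNIV"
      using grad_sum by blast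
    moreover have "(t + s) + (t + s') = 2 * t + (s + s')" by simp
    ultimately show ?thesis using True by (simp add: H_def h_def K_def d_def z_def)
  next
    case False
    then have "H x t = 0" for x
      by (auto simp: H_def h_def srw_p_fun_neg grad_zero)
    moreover have "K t = 0" using False unfolding K_def by auto
    ultimately show ?thesis by simp
  qed
  have \<psi>e: "((\<lambda>i. \<psi> (e i) t) has_sum \<Phi> t) UNIV" for t
    using has_sum_reindex_bij_betw[OF e, of "\<lambda>x. \<psi> x t"] \<psi>_sum by simp
  have He: "((\<lambda>i. H (e i) t) has_sum K t) UNIV" for t
    using has_sum_reindex_bij_betw[OF e, of "\<lambda>x. H x t"] H_sum by simp
  have He_sums: "(\<lambda>i. H (e i) t) sums K t" for t
    using He by (rule has_sum_imp_sums)
  have summ_norm: "summable (\<lambda>i. norm (H (e i) t))" for t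
  proof (rule summable_comparison_test)
    show "\<exists>N. \<forall>i\<ge>N. norm (norm (H (e i) t)) \<le> \<psi> (e i) t" using H_bound by auto
    show "summable (\<lambda>i. \<psi> (e i) t)" using \<psi>e[of t] by (intro sums_summable[OF has_sum_imp_sums])
  qed
  have int_bound: "(\<Sum>i<N. \<integral>t. norm (H (e i) t) \<partial>lborel) \<le> integral\<^sup>L lborel \<Phi>" for N
  proof -
    have "(\<Sum>i<N. \<integral>t. norm (H (e i) t) \<partial>lborel) = (\<integral>t. (\<Sum>i<N. norm (H (e i) t)) \<partial>lborel)"
      by (rule Bochner_Integration.integral_sum[symmetric]) (intro integrable_norm H_int)
    also have "\<dots> \<le> integral\<^sup>L lborel \<Phi>"
    proof (rule Bochner_Integration.integral_mono)
      show "integrable lborel (\<lambda>t. \<Sum>i<N. norm (H (e i) t))" by (intro Bochner_Integration.integrable_sum integrable_norm H_int)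
      show "integrable lborel \<Phi>" by (rule \<Phi>int)
      fix t
      have "(\<Sum>i<N. norm (H (e i) t)) \<le> (\<Sum>i<N. \<psi> (e i) t)"
        using H_bound by (intro sum_mono) auto
      also have "\<dots> \<le> \<Phi> t"
        by (rule finite_sum_le_has_sum[OF \<psi>e]) (auto simp: \<psi>0)
      finally show "(\<Sum>i<N. norm (H (e i) t)) \<le> \<Phi> t" .
    qed
    finally show ?thesis .
  qed
  have summ_int: "summable (\<lambda>i. \<integral>t. norm (H (e i) t) \<partial>lborel)"
    by (rule summableI_nonneg_bounded[OF _ int_bound]) auto
  have int_He: "integrable lborel (H (e i))" for i by (rule H_int)
  have AE_summ: "AE t in lborel. summable (\<lambda>i. norm (H (e i) t))" by (intro AE_I2 summ_norm)
  have sumint: "(\<lambda>i. integral\<^sup>L lborel (H (e i))) sums (\<integral>t. (\<Sum>i. H (e i) t) \<partial>lborel)"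
    by (rule sums_integral[OF int_He AE_summ summ_int])
  have intS: "integrable lborel (\<lambda>t. \<Sum>i. H (e i) t)"
    by (rule integrable_suminf[OF int_He AE_summ summ_int])
  have SK: "(\<lambda>t. \<Sum>i. H (e i) t) = K"
    using He_sums by (auto simp: fun_eq_iff sums_iff)
  have intK: "integrable lborel K" using intS SK by simp
  have sumintK: "(\<lambda>i. integral\<^sup>L lborel (H (e i))) sums integral\<^sup>L lborel K" using sumint SK by simp
  define t0 where "t0 = max (- s) (- s')"
  have t0v: "2 * t0 + (s + s') = \<bar>s - s'\<bar>" by (simp add: t0_def max_def abs_if)
  define G where "G = (\<lambda>t. 2 * (P 0 (2 * t + (s + s')) z - P 1 (2 * t + (s + s')) z))"
  have Gc: "continuous_on UNIV G"
    unfolding G_def by (intro continuous_at_imp_continuous_on ballI G_isCont)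
  have [measurable]: "G \<in> borel_measurable borel" by (rule borel_measurable_continuous_onI[OF Gc])
  have KG: "K = (\<lambda>t. if 0 \<le> t + s \<and> 0 \<le> t + s' then G t else 0)"
    by (simp add: K_def G_def fun_eq_iff)
  have measK: "K \<in> borel_measurable lborel" unfolding KG by measurable
  have measIG: "(\<lambda>t. indicator (einterval (ereal t0) \<infinity>) t *\<^sub>R G t) \<in> borel_measurable lborel"
    by measurable
  have AEK: "AE t in lborel. K t = indicator (einterval (ereal t0) \<infinity>) t *\<^sub>R G t"
    using AE_lborel_singleton[of t0]
    by eventually_elim (auto simp: KG indicator_def einterval_def t0_def)
  have setint: "set_integrable lborel (einterval (ereal t0) \<infinity>) G"
    unfolding set_integrable_def by (rule integrable_cong_AE_imp[OF intK measIG AEK])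
  have "(LBINT t=ereal t0..\<infinity>. G t) = P 0 (2 * t0 + (s + s')) z"
    using FTC_val[OF setint[unfolded G_def]] by (simp add: G_def)
  moreover have "(LBINT t=ereal t0..\<infinity>. G t) = integral\<^sup>L lborel K"
    by (simp add: interval_lebesgue_integral_def set_lebesgue_integral_def integral_cong_AE[OF measK measIG AEK])
  ultimately have Kval: "integral\<^sup>L lborel K = srw_p \<bar>s - s'\<bar> (y - y')"
    using t0v by (simp add: srw_p_eq z_def)
  have "((\<lambda>i. integral\<^sup>L lborel (H (e i))) has_sum integral\<^sup>L lborel K) UNIV"
  proof (rule norm_summable_imp_has_sum[OF _ sumintK])
    show "summable (\<lambda>i. norm (integral\<^sup>L lborel (H (e i))))"
      by (rule summable_comparison_test[OF _ summ_int]) (auto intro: integral_norm_bound)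
  qed
  then have hsx: "((\<lambda>x. integral\<^sup>L lborel (H x)) has_sum srw_p \<bar>s - s'\<bar> (y - y')) UNIV"
    using has_sum_reindex_bij_betw[OF e, of "\<lambda>x. integral\<^sup>L lborel (H x)"] Kval by simp
  have eqx: "integral\<^sup>L lborel (H x) = (1 / real CARD('n)) *
           (\<Sum>n\<in>(UNIV :: 'n set). integral (UNIV :: real set)
              (\<lambda>t. grad n (srw_p (t + s)) (x + y) * grad n (srw_p (t + s')) (x + y')))" for x
  proof -
    have "integral\<^sup>L lborel (H x) = (1 / d) * (\<Sum>n\<in>UNIV. integral\<^sup>L lborel (h x n))"
      unfolding H_def by (simp add: Bochner_Integration.integral_sum h_int)
    also have "\<dots> = (1 / d) * (\<Sum>n\<in>UNIV. integral UNIV (h x n))"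
      by (simp add: integral_lborel[OF h_int])
    finally show ?thesis by (simp add: d_def h_def)
  qed
  show ?thesis
    using part1 hsx eqx by simp
qed

end
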